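(* Let $\Theta$ be a branch of a tableau of $\mathbf{TAB}_{\mathbf{IB}}$, let $N^\Theta$ be the set of nominals occurring in $\Theta$, and let $\prec_\Theta$ be the generation relation on $N^\Theta$. Then the structure $G=(N^\Theta,\prec_\Theta)$ is a finite set of well-founded and finitely branching trees.
   Context: Hybrid language: fix disjoint countably infinite sets $\mathbf{Prop}$ (propositional variables) and $\mathbf{Nom}$ (nominals). Formulas: $\varphi ::= p \mid i \mid \neg\varphi \mid \varphi\land\varphi \mid \Diamond\varphi \mid @_i\varphi$ with $p\in\mathbf{Prop}$, $i\in\mathbf{Nom}$; $\Box\varphi$ abbreviates $\neg\Diamond\neg\varphi$. Tableau calculus $\mathbf{TAB}_{\mathbf{IB}}$. A tableau is a well-founded tree whose nodes are formulas of the form $@_i\varphi$; its root is a formula $@_i\varphi$ (the root formula) where $i$ does not occur in $\varphi$. A branch is a maximal path; $\varphi\in\Theta$ means $\varphi$ occurs on branch $\Theta$. Each branch is extended by applying the rules below to its formulas as often as possible, except that no further formula is added to a branch once either (i) every new formula generated by applying any rule already occurs on the branch, or (ii) the branch is closed, i.e. contains $@_i\varphi$ and $@_i\neg\varphi$ for some formula $\varphi$ and nominal $i$. An accessibility formula is a formula $@_i\Diamond j$ added by rule $[\Diamond]$ (with $j$ the new nominal). Rules (premises already on the branch; conclusions added to it): [$\neg\neg$] from $@_i\neg\neg\varphi$ add $@_i\varphi$; [$\land$] from $@_i(\varphi\land\psi)$ add $@_i\varphi$ and $@_i\psi$; [$\neg\land$] from $@_i\neg(\varphi\land\psi)$ split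 the branch into one extended by $@_i\neg\varphi$ and one extended by $@_i\neg\psi$; [$\Diamond$] from $@_i\Diamond\varphi$, which is not an accessibility formula, add $@_i\Diamond j$ and $@_j\varphi$ where $j$ is a nominal not occurring on the branch; this rule is applied at most once per formula, and only if $i$ is a quasi-urfather on the branch (defined below); [$\neg\Diamond$] from $@_i\neg\Diamond\varphi$ and $@_i\Diamond j$ add $@_j\neg\varphi$; [$\Box_{sym}$] from $@_i\Box\varphi$ and $@_j\Diamond i$ add $@_j\varphi$; [$@$] from $@_i@_j\varphi$ add $@_j\varphi$; [$\neg@$] from $@_i\neg@_j\varphi$ add $@_j\neg\varphi$; [$Id$] from $@_i\varphi$, which is not an accessibility formula, and $@_i j$ add $@_j\varphi$; [$Ref$] for any nominal $i$ occurring on the branch add $@_i i$; ($\mathcal{I}$) for any nominal $i$ occurring on the branch add $@_i\neg\Diamond i$. Auxiliary notions for a branch $\Theta$. $@_i\varphi$ is a quasi-subformula of $@_j\psi$ if $\varphi$ is a subformula of $\psi$, or $\varphi=\neg\chi$ with $\chi$ a subformula of $\psi$. For a nominal $i$ occurring in $\Theta$, $T^\Theta(i)=\{\varphi \mid @_i\varphi\in\Theta$ and $@_i\varphi$ is a quasi-subformula of the root formula$\}$. Nominals $i,j$ are twins if $T^\Theta(i)=T^\Theta(j)$. The generation relation: $i\prec_\Theta j$ if $j$ was introduced by applying $[\Diamond]$ to a formula $@_i\Diamond\varphi$ (equivalently, the accessibility formula $@_i\Diamond j$ is in $\Theta$); $\prec_\Theta^*$ is its reflexive transitive closure. A nominal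 $i$ is a quasi-urfather on $\Theta$ if there are no twins $j\neq k$ with $j\prec_\Theta^* i$ and $k\prec_\Theta^* i$. *)

theory Defs
  imports Main
begin

(* Propositional variables and nominals are both represented by nat
   (two disjoint countably infinite sets, distinguished by constructor). *)
datatype form =
    Pr nat
  | Nm nat
  | Neg form
  | Conj form form
  | Dia form
  | At nat form

definition Box :: "form \<Rightarrow> form" where
  "Box \<phi> = Neg (Dia (Neg \<phi>))"

(* A tableau node @_i phi is represented as the pair (i, phi). *)
type_synonym node = "nat \<times> form"
(* Record of [Dia]-applications: (i, phi, j) means [Dia] was applied to
   @_i Dia phi, introducing the new nominal j (accessibility formula @_i Dia j). *)
type_synonym accrec = "nat \<times> form \<times> nat"
type_synonym state = "node set \<times> accrec set"

fun nomsf :: "form \<Rightarrow> nat set" where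
  "nomsf (Pr p) = {}"
| "nomsf (Nm i) = {i}"
| "nomsf (Neg \<phi>) = nomsf \<phi>"
| "nomsf (Conj \<phi> \<psi>) = nomsf \<phi> \<union> nomsf \<psi>"
| "nomsf (Dia \<phi>) = nomsf \<phi>"
| "nomsf (At i \<phi>) = insert i (nomsf \<phi>)"

fun subf :: "form \<Rightarrow> form set" where
  "subf (Pr p) = {Pr p}"
| "subf (Nm i) = {Nm i}"
| "subf (Neg \<phi>) = insert (Neg \<phi>) (subf \<phi>)"
| "subf (Conj \<phi> \<psi>) = insert (Conj \<phi> \<psi>) (subf \<phi> \<union> subf \<psi>)"
| "subf (Dia \<phi>) = insert (Dia \<phi>) (subf \<phi>)"
| "subf (At i \<phi>) = insert (At i \<phi>) (subf \<phi>)"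

definition noms :: "node set \<Rightarrow> nat set" where
  "noms F = (\<Union>(i, \<phi>)\<in>F. insert i (nomsf \<phi>))"

definition closed :: "node set \<Rightarrow> bool" where
  "closed F \<longleftrightarrow> (\<exists>i \<phi>. (i, \<phi>) \<in> F \<and> (i, Neg \<phi>) \<in> F)"

definition acc :: "accrec set \<Rightarrow> nat \<Rightarrow> form \<Rightarrow> bool" where
  "acc A i \<phi> \<longleftrightarrow> (\<exists>j \<psi>. \<phi> = Dia (Nm j) \<and> (i, \<psi>, j) \<in> A)"

definition quasi_sub :: "form \<Rightarrow> form \<Rightarrow> bool" where
  "quasi_sub \<phi> \<psi> \<longleftrightarrow> \<phi> \<in> subf \<psi> \<or> (\<exists>\<chi>. \<phi> = Neg \<chi> \<and> \<chi> \<in> subf \<psi>)"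

definition Tset :: "form \<Rightarrow> node set \<Rightarrow> nat \<Rightarrow> form set" where
  "Tset \<psi> F i = {\<phi>. (i, \<phi>) \<in> F \<and> quasi_sub \<phi> \<psi>}"

definition gen :: "accrec set \<Rightarrow> nat \<Rightarrow> nat \<Rightarrow> bool" where
  "gen A i j \<longleftrightarrow> (\<exists>\<phi>. (i, \<phi>, j) \<in> A)"

definition quasi_urfather :: "form \<Rightarrow> state \<Rightarrow> nat \<Rightarrow> bool" where
  "quasi_urfather \<psi> st i \<longleftrightarrow>
     \<not> (\<exists>j k. j \<in> noms (fst st) \<and> k \<in> noms (fst st) \<and> j \<noteq> k \<and>
            Tset \<psi> (fst st) j = Tset \<psi> (fst st) k \<and>
            (gen (snd st))\<^sup>*\<^sup>* j i \<and> (gen (snd st))\<^sup>*\<^sup>* k i)"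

(* Instances of all rules except [Dia], given by their list of alternative
   conclusion sets (one alternative per resulting branch). *)
definition nd_inst :: "state \<Rightarrow> node set list \<Rightarrow> bool" where
  "nd_inst st alts \<longleftrightarrow> (let F = fst st; A = snd st in
     (\<exists>i \<phi>. (i, Neg (Neg \<phi>)) \<in> F \<and> alts = [{(i, \<phi>)}])
   \<or> (\<exists>i \<phi> \<psi>. (i, Conj \<phi> \<psi>) \<in> F \<and> alts = [{(i, \<phi>), (i, \<psi>)}])
   \<or> (\<exists>i \<phi> \<psi>. (i, Neg (Conj \<phi> \<psi>)) \<in> F \<and> alts = [{(i, Neg \<phi>)}, {(i, Neg \<psi>)}])
   \<or> (\<exists>i \<phi> j. (i, Neg (Dia \<phi>)) \<in> F \<and> (i, Dia (Nm j)) \<in> F \<and> alts = [{(j, Neg \<phi>)}])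
   \<or> (\<exists>i \<phi> j. (i, Box \<phi>) \<in> F \<and> (j, Dia (Nm i)) \<in> F \<and> alts = [{(j, \<phi>)}])
   \<or> (\<exists>i j \<phi>. (i, At j \<phi>) \<in> F \<and> alts = [{(j, \<phi>)}])
   \<or> (\<exists>i j \<phi>. (i, Neg (At j \<phi>)) \<in> F \<and> alts = [{(j, Neg \<phi>)}])
   \<or> (\<exists>i j \<phi>. (i, \<phi>) \<in> F \<and> \<not> acc A i \<phi> \<and> (i, Nm j) \<in> F \<and> alts = [{(j, \<phi>)}])
   \<or> (\<exists>i. i \<in> noms F \<and> alts = [{(i, Nm i)}])
   \<or> (\<exists>i. i \<in> noms F \<and> alts = [{(i, Neg (Dia (Nm i)))}]))"

definition enabled_nd :: "state \<Rightarrow> node set list \<Rightarrow> bool" where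
  "enabled_nd st alts \<longleftrightarrow> nd_inst st alts \<and> \<not> closed (fst st) \<and>
     (\<forall>C\<in>set alts. \<not> C \<subseteq> fst st)"

definition enabled_dia :: "form \<Rightarrow> state \<Rightarrow> nat \<Rightarrow> form \<Rightarrow> bool" where
  "enabled_dia \<psi> st i \<phi> \<longleftrightarrow> (i, Dia \<phi>) \<in> fst st \<and> \<not> acc (snd st) i (Dia \<phi>) \<and>
     \<not> (\<exists>j. (i, \<phi>, j) \<in> snd st) \<and> quasi_urfather \<psi> st i \<and> \<not> closed (fst st)"

definition step :: "form \<Rightarrow> state \<Rightarrow> state \<Rightarrow> bool" where
  "step \<psi> st st' \<longleftrightarrow>
     (\<exists>alts C. enabled_nd st alts \<and> C \<in> set alts \<and> st' = (fst st \<union> C, snd st))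
   \<or> (\<exists>i \<phi> j. enabled_dia \<psi> st i \<phi> \<and> j \<notin> noms (fst st) \<and>
        st' = (fst st \<union> {(i, Dia (Nm j)), (j, \<phi>)}, insert (i, \<phi>, j) (snd st)))"

definition saturated :: "form \<Rightarrow> state \<Rightarrow> bool" where
  "saturated \<psi> st \<longleftrightarrow> \<not> (\<exists>alts. enabled_nd st alts) \<and> \<not> (\<exists>i \<phi>. enabled_dia \<psi> st i \<phi>)"

(* S enumerates the successive stages of one branch of a TAB_IB tableau with
   root formula @_r psi: every stage is obtained by one rule application, the
   construction stops only when no rule can add anything new or the branch is
   closed, and (for infinite branches) no rule instance stays applicable forever. *)
definition tab_branch :: "nat \<Rightarrow> form \<Rightarrow> (nat \<Rightarrow> state) \<Rightarrow> bool" where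
  "tab_branch r \<psi> S \<longleftrightarrow>
     r \<notin> nomsf \<psi> \<and>
     S 0 = ({(r, \<psi>)}, {}) \<and>
     (\<forall>n. step \<psi> (S n) (S (Suc n)) \<or> (S (Suc n) = S n \<and> saturated \<psi> (S n))) \<and>
     (\<forall>n alts. enabled_nd (S n) alts \<longrightarrow> (\<exists>m\<ge>n. \<not> enabled_nd (S m) alts)) \<and>
     (\<forall>n i \<phi>. enabled_dia \<psi> (S n) i \<phi> \<longrightarrow> (\<exists>m\<ge>n. \<not> enabled_dia \<psi> (S m) i \<phi>))"

definition branch_nodes :: "(nat \<Rightarrow> state) \<Rightarrow> node set" where
  "branch_nodes S = (\<Union>n. fst (S n))"

definition branch_noms :: "(nat \<Rightarrow> state) \<Rightarrow> nat set" where
  "branch_noms S = noms (branch_nodes S)"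

definition gen_rel :: "(nat \<Rightarrow> state) \<Rightarrow> (nat \<times> nat) set" where
  "gen_rel S = {(i, j). \<exists>n. gen (snd (S n)) i j}"

definition finite_wf_fb_forest :: "'a set \<Rightarrow> ('a \<times> 'a) set \<Rightarrow> bool" where
  "finite_wf_fb_forest N G \<longleftrightarrow>
     G \<subseteq> N \<times> N \<and>
     (\<forall>i i' j. (i, j) \<in> G \<and> (i', j) \<in> G \<longrightarrow> i = i') \<and>
     finite {r \<in> N. \<forall>i. (i, r) \<notin> G} \<and>
     (\<forall>j\<in>N. \<exists>r\<in>N. (\<forall>i. (i, r) \<notin> G) \<and> (r, j) \<in> G\<^sup>*) \<and>
     wf G \<and>
     (\<forall>i\<in>N. finite {j. (i, j) \<in> G})"

end

theory Submission
  imports Defs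
begin

lemma subf_refl: "\<phi> \<in> subf \<phi>"
  by (cases \<phi>) auto

lemma subf_trans: "\<chi> \<in> subf \<phi> \<Longrightarrow> \<phi> \<in> subf \<psi> \<Longrightarrow> \<chi> \<in> subf \<psi>"
  by (induction \<psi>) auto

lemma subf_D1: "Neg \<phi> \<in> subf \<psi> \<Longrightarrow> \<phi> \<in> subf \<psi>"
  by (erule subf_trans[rotated]) (simp add: subf_refl)
lemma subf_D2: "Dia \<phi> \<in> subf \<psi> \<Longrightarrow> \<phi> \<in> subf \<psi>"
  by (erule subf_trans[rotated]) (simp add: subf_refl)
lemma subf_D3: "Conj \<phi> \<chi> \<in> subf \<psi> \<Longrightarrow> \<phi> \<in> subf \<psi>"
  by (erule subf_trans[rotated]) (simp add: subf_refl)
lemma subf_D4: "Conj \<phi> \<chi> \<in> subf \<psi> \<Longrightarrow> \<chi> \<in> subf \<psi>"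
  by (erule subf_trans[rotated]) (simp add: subf_refl)
lemma subf_D5: "At j \<phi> \<in> subf \<psi> \<Longrightarrow> \<phi> \<in> subf \<psi>"
  by (erule subf_trans[rotated]) (simp add: subf_refl)
lemmas subf_D = subf_D1 subf_D2 subf_D3 subf_D4 subf_D5

lemma finite_subf: "finite (subf \<psi>)"
  by (induction \<psi>) auto

lemma finite_nomsf: "finite (nomsf \<psi>)"
  by (induction \<psi>) auto

lemma noms_simps:
  "noms (F \<union> G) = noms F \<union> noms G"
  "noms (insert (i, \<phi>) F) = insert i (nomsf \<phi> \<union> noms F)"
  "noms {} = {}"
  by (auto simp: noms_def)

lemma noms_mono: "F \<subseteq> G \<Longrightarrow> noms F \<subseteq> noms G"
  by (auto simp: noms_def)

lemma noms_mem: "(i, \<phi>) \<in> F \<Longrightarrow> i \<in> noms F"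
  by (auto simp: noms_def)

lemma noms_mem2: "(i, \<phi>) \<in> F \<Longrightarrow> j \<in> nomsf \<phi> \<Longrightarrow> j \<in> noms F"
  by (auto simp: noms_def)

definition good :: "form \<Rightarrow> accrec set \<Rightarrow> nat \<Rightarrow> form \<Rightarrow> bool" where
  "good \<psi> A i \<phi> \<longleftrightarrow> \<phi> \<in> subf \<psi> \<or> (\<exists>\<chi>. \<phi> = Neg \<chi> \<and> \<chi> \<in> subf \<psi>) \<or> (\<exists>j. \<phi> = Nm j)
     \<or> (\<exists>j. \<phi> = Neg (Nm j)) \<or> (\<exists>j. \<phi> = Neg (Dia (Nm j))) \<or> (\<exists>j. \<phi> = Dia (Nm j) \<and> acc A i \<phi>)"

definition ginv :: "form \<Rightarrow> state \<Rightarrow> bool" where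
  "ginv \<psi> st \<longleftrightarrow> (\<forall>i \<phi>. (i, \<phi>) \<in> fst st \<longrightarrow> good \<psi> (snd st) i \<phi>)"

lemma good_mono: "good \<psi> A i \<phi> \<Longrightarrow> A \<subseteq> A' \<Longrightarrow> good \<psi> A' i \<phi>"
  unfolding good_def acc_def by blast

lemma gl1: "good \<psi> A i (Neg (Neg a)) \<Longrightarrow> good \<psi> A k a"
  unfolding good_def acc_def using subf_D1[of "Neg a"] subf_D1[of a] by auto
lemma gl2: "good \<psi> A i (Conj a b) \<Longrightarrow> good \<psi> A k a"
  unfolding good_def acc_def using subf_D3[of a b] by auto
lemma gl3: "good \<psi> A i (Conj a b) \<Longrightarrow> good \<psi> A k b"
  unfolding good_def acc_def using subf_D4[of a b] by auto
lemma gl4: "good \<psi> A i (Neg (Conj a b)) \<Longrightarrow> good \<psi> A k (Neg a)"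
  unfolding good_def acc_def using subf_D3[of a b] subf_D1[of "Conj a b"] by auto
lemma gl5: "good \<psi> A i (Neg (Conj a b)) \<Longrightarrow> good \<psi> A k (Neg b)"
  unfolding good_def acc_def using subf_D4[of a b] subf_D1[of "Conj a b"] by auto
lemma gl6: "good \<psi> A i (Neg (Dia a)) \<Longrightarrow> good \<psi> A k (Neg a)"
  unfolding good_def acc_def using subf_D2[of a] subf_D1[of "Dia a"] by auto
lemma gl8: "good \<psi> A i (At j a) \<Longrightarrow> good \<psi> A k a"
  unfolding good_def acc_def using subf_D5[of j a] by auto
lemma gl9: "good \<psi> A i (Neg (At j a)) \<Longrightarrow> good \<psi> A k (Neg a)"
  unfolding good_def acc_def using subf_D5[of j a] subf_D1[of "At j a"] by auto
lemma gl10: "good \<psi> A i a \<Longrightarrow> \<not> acc A i a \<Longrightarrow> good \<psi> A k a"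
  unfolding good_def by auto
lemma gl11: "good \<psi> A k (Nm i)" "good \<psi> A k (Neg (Dia (Nm i)))"
  unfolding good_def by auto
lemmas gl = gl1 gl2 gl3 gl4 gl5 gl6 gl8 gl9 gl10 gl11

lemma gl7: "good \<psi> A i (Neg (Dia (Neg a))) \<Longrightarrow> good \<psi> A k a"
  unfolding good_def acc_def
  apply (elim disjE exE conjE)
  apply (rule disjI1, erule subf_D1[OF subf_D2[OF subf_D1]])
  apply (rule disjI1, simp, erule subf_D1[OF subf_D2])
  apply simp_all
  done

lemma nd_good:
  assumes "ginv \<psi> st" "nd_inst st alts" "C \<in> set alts" "(i, \<phi>) \<in> C"
  shows "good \<psi> (snd st) i \<phi>"
  using assms unfolding nd_inst_def Let_def ginv_def
  apply (elim disjE exE conjE)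
  apply (simp_all add: Box_def)
  apply (auto intro: gl gl7)
  done

lemma noms_sub: "(i,X) \<in> F \<Longrightarrow> i \<in> noms F \<and> nomsf X \<subseteq> noms F"
  by (auto simp: noms_def)

lemma nd_noms:
  assumes "nd_inst st alts" "C \<in> set alts"
  shows "noms C \<subseteq> noms (fst st)"
  using assms unfolding nd_inst_def Let_def
  apply (elim disjE exE conjE)
  apply (((drule noms_sub)+)?; auto simp: noms_simps Box_def)+
  done

lemma step_ginv:
  assumes "ginv \<psi> st" "step \<psi> st st'"
  shows "ginv \<psi> st'"
  using assms(2) unfolding step_def
proof (elim disjE exE conjE)
  fix alts C assume "enabled_nd st alts" "C \<in> set alts" "st' = (fst st \<union> C, snd st)"
  then show ?thesis using assms(1) nd_good[OF assms(1)] unfolding ginv_def enabled_nd_def by auto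
next
  fix i \<phi> j assume en: "enabled_dia \<psi> st i \<phi>" and st': "st' = (fst st \<union> {(i, Dia (Nm j)), (j, \<phi>)}, insert (i, \<phi>, j) (snd st))"
  have g: "good \<psi> (snd st) i (Dia \<phi>)" using en assms(1) unfolding enabled_dia_def ginv_def by auto
  have "\<phi> \<in> subf \<psi>" using g en unfolding good_def enabled_dia_def by (auto dest: subf_D)
  then have "good \<psi> (insert (i, \<phi>, j) (snd st)) j \<phi>" by (simp add: good_def)
  moreover have "good \<psi> (insert (i, \<phi>, j) (snd st)) i (Dia (Nm j))" by (auto simp: good_def acc_def)
  moreover have "\<And>k \<chi>. (k, \<chi>) \<in> fst st \<Longrightarrow> good \<psi> (insert (i, \<phi>, j) (snd st)) k \<chi>"
    using assms(1) good_mono unfolding ginv_def by blast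
  ultimately show ?thesis using st' unfolding ginv_def by auto
qed

lemma step_mono: "step \<psi> st st' \<Longrightarrow> fst st \<subseteq> fst st' \<and> snd st \<subseteq> snd st'"
  by (auto simp: step_def)

lemma step_noms:
  assumes "step \<psi> st st'"
  shows "noms (fst st') \<subseteq> noms (fst st) \<union> {j. \<exists>i \<phi>. (i, \<phi>, j) \<in> snd st'}"
  using assms unfolding step_def
proof (elim disjE exE conjE)
  fix alts C assume "enabled_nd st alts" "C \<in> set alts" "st' = (fst st \<union> C, snd st)"
  then show ?thesis using nd_noms[of st alts C] by (auto simp: enabled_nd_def noms_simps)
next
  fix i \<phi> j assume en: "enabled_dia \<psi> st i \<phi>" and st': "st' = (fst st \<union> {(i, Dia (Nm j)), (j, \<phi>)}, insert (i, \<phi>, j) (snd st))"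
  have "(i, Dia \<phi>) \<in> fst st" using en by (simp add: enabled_dia_def)
  from noms_sub[OF this] show ?thesis using st' by (auto simp: noms_simps)
qed

lemma step_new:
  assumes "step \<psi> st st'" "x \<notin> snd st" "x \<in> snd st'"
  shows "\<exists>i \<phi> j. x = (i, \<phi>, j) \<and> enabled_dia \<psi> st i \<phi> \<and> j \<notin> noms (fst st) \<and>
     st' = (fst st \<union> {(i, Dia (Nm j)), (j, \<phi>)}, insert (i, \<phi>, j) (snd st))"
  using assms unfolding step_def by auto

lemma subsingleton_finite: "(\<And>x y. P x \<Longrightarrow> P y \<Longrightarrow> x = y) \<Longrightarrow> finite {x. P x}"
proof (cases "\<exists>x. P x")
  case True
  then obtain x0 where "P x0" by blast
  assume "\<And>x y. P x \<Longrightarrow> P y \<Longrightarrow> x = y"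
  then have "{x. P x} \<subseteq> {x0}" using \<open>P x0\<close> by blast
  then show ?thesis using finite_subset by blast
qed auto

context
  fixes r \<psi> S
  assumes tb: "tab_branch r \<psi> S"
begin

lemma tb_step: "step \<psi> (S n) (S (Suc n)) \<or> S (Suc n) = S n"
  using tb by (auto simp: tab_branch_def)

lemma tb_0: "S 0 = ({(r, \<psi>)}, {})"
  using tb by (auto simp: tab_branch_def)

lemma fst_mono: "m \<le> n \<Longrightarrow> fst (S m) \<subseteq> fst (S n)"
proof -
  have "\<And>n. fst (S n) \<subseteq> fst (S (Suc n))"
  proof -
    fix n show "fst (S n) \<subseteq> fst (S (Suc n))"
      using tb_step[of n] step_mono[of \<psi> "S n" "S (Suc n)"] by auto
  qed
  then show "m \<le> n \<Longrightarrow> fst (S m) \<subseteq> fst (S n)" by (rule lift_Suc_mono_le)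
qed

lemma snd_mono: "m \<le> n \<Longrightarrow> snd (S m) \<subseteq> snd (S n)"
proof -
  have "\<And>n. snd (S n) \<subseteq> snd (S (Suc n))"
  proof -
    fix n show "snd (S n) \<subseteq> snd (S (Suc n))"
      using tb_step[of n] step_mono[of \<psi> "S n" "S (Suc n)"] by auto
  qed
  then show "m \<le> n \<Longrightarrow> snd (S m) \<subseteq> snd (S n)" by (rule lift_Suc_mono_le)
qed

lemma noms_S_mono: "m \<le> n \<Longrightarrow> noms (fst (S m)) \<subseteq> noms (fst (S n))"
  using fst_mono noms_mono by blast

lemma ginv_S: "ginv \<psi> (S n)"
proof (induction n)
  case 0
  then show ?case using tb_0 by (simp add: ginv_def good_def subf_refl)
next
  case (Suc n)
  then show ?case using tb_step[of n] step_ginv[OF Suc.IH, of "S (Suc n)"] by (metis (no_types))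
qed

lemma noms_bound: "noms (fst (S n)) \<subseteq> insert r (nomsf \<psi>) \<union> {j. \<exists>i \<phi>. (i, \<phi>, j) \<in> snd (S n)}"
proof (induction n)
  case 0
  then show ?case using tb_0 by (simp add: noms_simps)
next
  case (Suc n)
  have "snd (S n) \<subseteq> snd (S (Suc n))" using snd_mono by simp
  moreover have "noms (fst (S (Suc n))) \<subseteq> noms (fst (S n)) \<union> {j. \<exists>i \<phi>. (i, \<phi>, j) \<in> snd (S (Suc n))}"
    using tb_step[of n] step_noms[of \<psi> "S n" "S (Suc n)"] by auto
  ultimately show ?case using Suc.IH by blast
qed

lemma intro_time: "x \<in> snd (S m) \<Longrightarrow> \<exists>n<m. x \<notin> snd (S n) \<and> x \<in> snd (S (Suc n))"
proof (induction m)
  case 0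
  then show ?case using tb_0 by simp
next
  case (Suc m)
  show ?case
  proof (cases "x \<in> snd (S m)")
    case True
    then obtain n where "n < m" "x \<notin> snd (S n) \<and> x \<in> snd (S (Suc n))" using Suc.IH by blast
    then show ?thesis by (intro exI[of _ n]) auto
  next
    case False
    then show ?thesis using Suc.prems by (intro exI[of _ m]) auto
  qed
qed

lemma rec_info:
  assumes "x \<notin> snd (S n)" "x \<in> snd (S (Suc n))"
  shows "\<exists>i \<phi> j. x = (i, \<phi>, j) \<and> enabled_dia \<psi> (S n) i \<phi> \<and> j \<notin> noms (fst (S n)) \<and>
     S (Suc n) = (fst (S n) \<union> {(i, Dia (Nm j)), (j, \<phi>)}, insert (i, \<phi>, j) (snd (S n)))"
proof -
  have "S (Suc n) \<noteq> S n" using assms by auto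
  then have "step \<psi> (S n) (S (Suc n))" using tb_step by blast
  from step_new[OF this assms] show ?thesis .
qed

lemma edge:
  assumes "(a, b) \<in> gen_rel S"
  shows "\<exists>n \<phi>. enabled_dia \<psi> (S n) a \<phi> \<and> b \<notin> noms (fst (S n)) \<and> (a, \<phi>, b) \<notin> snd (S n) \<and>
     S (Suc n) = (fst (S n) \<union> {(a, Dia (Nm b)), (b, \<phi>)}, insert (a, \<phi>, b) (snd (S n)))"
proof -
  obtain m \<phi> where "(a, \<phi>, b) \<in> snd (S m)" using assms by (auto simp: gen_rel_def gen_def)
  then obtain n where n: "(a, \<phi>, b) \<notin> snd (S n)" "(a, \<phi>, b) \<in> snd (S (Suc n))" using intro_time by blast
  from rec_info[OF n] obtain i \<phi>' j where r: "(a, \<phi>, b) = (i, \<phi>', j)" "enabled_dia \<psi> (S n) i \<phi>'"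
    "j \<notin> noms (fst (S n))" "S (Suc n) = (fst (S n) \<union> {(i, Dia (Nm j)), (j, \<phi>')}, insert (i, \<phi>', j) (snd (S n)))"
    by blast
  from r(1) have e: "i = a" "\<phi>' = \<phi>" "j = b" by auto
  show ?thesis
    apply (rule exI[of _ n], rule exI[of _ \<phi>])
    using r(2-4) n(1) unfolding e by blast
qed

lemma edge_noms:
  assumes "(a, b) \<in> gen_rel S"
  shows "\<exists>n. a \<in> noms (fst (S n)) \<and> b \<notin> noms (fst (S n)) \<and> a \<in> noms (fst (S (Suc n))) \<and> b \<in> noms (fst (S (Suc n)))"
proof -
  obtain n \<phi> where e: "enabled_dia \<psi> (S n) a \<phi>" "b \<notin> noms (fst (S n))"
     "S (Suc n) = (fst (S n) \<union> {(a, Dia (Nm b)), (b, \<phi>)}, insert (a, \<phi>, b) (snd (S n)))"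
    using edge[OF assms] by blast
  have "(a, Dia \<phi>) \<in> fst (S n)" using e(1) by (simp add: enabled_dia_def)
  then have "a \<in> noms (fst (S n))" by (rule noms_mem)
  moreover have "(a, Dia (Nm b)) \<in> fst (S (Suc n))" using e(3) by simp
  moreover have "b \<in> noms (fst (S (Suc n)))" using noms_sub[OF \<open>(a, Dia (Nm b)) \<in> fst (S (Suc n))\<close>] by simp
  moreover have "noms (fst (S n)) \<subseteq> noms (fst (S (Suc n)))" using noms_S_mono by simp
  ultimately show ?thesis using e(2) by blast
qed

lemma branch_noms_eq: "branch_noms S = (\<Union>n. noms (fst (S n)))"
  by (auto simp: branch_noms_def noms_def branch_nodes_def)

lemma edge2:
  assumes "(a, b) \<in> gen_rel S"
  shows "\<exists>n \<phi>. enabled_dia \<psi> (S n) a \<phi> \<and> b \<notin> noms (fst (S n)) \<and> b \<in> noms (fst (S (Suc n))) \<and>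
     a \<in> noms (fst (S n)) \<and> (a, \<phi>, b) \<notin> snd (S n) \<and> Dia \<phi> \<in> subf \<psi> \<and>
     snd (S (Suc n)) = insert (a, \<phi>, b) (snd (S n))"
proof -
  obtain n \<phi> where e: "enabled_dia \<psi> (S n) a \<phi>" "b \<notin> noms (fst (S n))" "(a, \<phi>, b) \<notin> snd (S n)"
     "S (Suc n) = (fst (S n) \<union> {(a, Dia (Nm b)), (b, \<phi>)}, insert (a, \<phi>, b) (snd (S n)))"
    using edge[OF assms] by blast
  have ad: "(a, Dia \<phi>) \<in> fst (S n)" using e(1) by (simp add: enabled_dia_def)
  then have an: "a \<in> noms (fst (S n))" by (rule noms_mem)
  have "(a, Dia (Nm b)) \<in> fst (S (Suc n))" using e(4) by simp
  then have bn: "b \<in> noms (fst (S (Suc n)))" using noms_sub[of a "Dia (Nm b)"] by simp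
  have "good \<psi> (snd (S n)) a (Dia \<phi>)" using ginv_S[of n] ad by (simp add: ginv_def)
  moreover have "\<not> acc (snd (S n)) a (Dia \<phi>)" using e(1) by (simp add: enabled_dia_def)
  ultimately have "Dia \<phi> \<in> subf \<psi>" unfolding good_def by auto
  moreover have "snd (S (Suc n)) = insert (a, \<phi>, b) (snd (S n))" using e(4) by simp
  ultimately show ?thesis using e(1-3) an bn by blast
qed

lemma time_unique:
  assumes "j \<notin> noms (fst (S n))" "j \<in> noms (fst (S (Suc n)))"
    "j \<notin> noms (fst (S n'))" "j \<in> noms (fst (S (Suc n')))"
  shows "n = n'"
proof (rule ccontr)
  assume "n \<noteq> n'"
  then have "Suc n \<le> n' \<or> Suc n' \<le> n" by auto
  then show False using assms noms_S_mono by blast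
qed

end

theorem lemma3:
  assumes "tab_branch r \<psi> S"
  shows "finite_wf_fb_forest (branch_noms S) (gen_rel S)"
proof -
  note tb = assms
  define N where "N = branch_noms S"
  define G where "G = gen_rel S"
  have Neq: "N = (\<Union>n. noms (fst (S n)))" unfolding N_def using branch_noms_eq[OF tb] .
  have sub: "G \<subseteq> N \<times> N"
  proof
    fix x assume "x \<in> G"
    then obtain a b where x: "x = (a, b)" "(a, b) \<in> gen_rel S" unfolding G_def by (cases x) auto
    from edge_noms[OF tb x(2)] show "x \<in> N \<times> N" unfolding Neq x(1) by blast
  qed
  have uniq: "\<forall>i i' j. (i, j) \<in> G \<and> (i', j) \<in> G \<longrightarrow> i = i'"
  proof (intro allI impI, elim conjE)
    fix i i' j assume "(i, j) \<in> G" "(i', j) \<in> G"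
    then obtain n \<phi> n' \<phi>' where e: "j \<notin> noms (fst (S n))" "j \<in> noms (fst (S (Suc n)))"
      "(i, \<phi>, j) \<notin> snd (S n)" "snd (S (Suc n)) = insert (i, \<phi>, j) (snd (S n))"
      and e': "j \<notin> noms (fst (S n'))" "j \<in> noms (fst (S (Suc n')))"
      "snd (S (Suc n')) = insert (i', \<phi>', j) (snd (S n'))"
      unfolding G_def using edge2[OF tb] by meson
    have "n = n'" using time_unique[OF tb e(1,2) e'(1,2)] .
    then have "(i, \<phi>, j) \<in> insert (i', \<phi>', j) (snd (S n))" using e(4) e'(3) by auto
    then show "i = i'" using e(3) by auto
  qed
  have roots: "{x \<in> N. \<forall>i. (i, x) \<notin> G} \<subseteq> insert r (nomsf \<psi>)"
  proof
    fix x assume "x \<in> {x \<in> N. \<forall>i. (i, x) \<notin> G}"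
    then have x: "x \<in> N" "\<forall>i. (i, x) \<notin> G" by auto
    then obtain n where "x \<in> noms (fst (S n))" unfolding Neq by auto
    then have "x \<in> insert r (nomsf \<psi>) \<or> (\<exists>i \<phi>. (i, \<phi>, x) \<in> snd (S n))" using noms_bound[OF tb, of n] by auto
    moreover have "\<not> (\<exists>i \<phi>. (i, \<phi>, x) \<in> snd (S n))"
      using x(2) unfolding G_def gen_rel_def gen_def by blast
    ultimately show "x \<in> insert r (nomsf \<psi>)" by blast
  qed
  define birth where "birth x = (LEAST n. x \<in> noms (fst (S n)))" for x
  have birth_lt: "birth a < birth b" if ab: "(a, b) \<in> G" for a b
  proof -
    obtain n where n: "a \<in> noms (fst (S n))" "b \<notin> noms (fst (S n))" "b \<in> noms (fst (S (Suc n)))"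
      using edge_noms[OF tb, of a b] ab unfolding G_def by blast
    have "birth a \<le> n" unfolding birth_def using n(1) by (rule Least_le)
    moreover have bb: "b \<in> noms (fst (S (birth b)))" unfolding birth_def using n(3) by (rule LeastI)
    have "\<not> birth b \<le> n"
    proof
      assume "birth b \<le> n"
      then have "b \<in> noms (fst (S n))" using bb noms_S_mono[OF tb] by blast
      then show False using n(2) by blast
    qed
    ultimately show ?thesis by simp
  qed
  have wfG: "wf G"
  proof (rule wf_subset[OF wf_inv_image[OF wf_less_than, of birth]])
    show "G \<subseteq> inv_image less_than birth" using birth_lt by auto
  qed
  have reach: "\<forall>j\<in>N. \<exists>r\<in>N. (\<forall>i. (i, r) \<notin> G) \<and> (r, j) \<in> G\<^sup>*"
  proof
    fix j assume jN: "j \<in> N"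
    have "j \<in> {i. (i, j) \<in> G\<^sup>*}" by simp
    then obtain m where m: "m \<in> {i. (i, j) \<in> G\<^sup>*}" "\<And>y. (y, m) \<in> G \<Longrightarrow> y \<notin> {i. (i, j) \<in> G\<^sup>*}"
      using wfG unfolding wf_eq_minimal by metis
    have mj: "(m, j) \<in> G\<^sup>*" using m(1) by simp
    have noparent: "\<forall>i. (i, m) \<notin> G"
    proof (intro allI notI)
      fix i assume "(i, m) \<in> G"
      then have "(i, j) \<in> G\<^sup>*" using mj by (rule converse_rtrancl_into_rtrancl)
      then show False using m(2)[OF \<open>(i, m) \<in> G\<close>] by simp
    qed
    have "m \<in> N"
      using mj
    proof (cases rule: converse_rtranclE)
      case base then show ?thesis using jN by simp
    next
      case (step z) then show ?thesis using sub by auto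
    qed
    then show "\<exists>r\<in>N. (\<forall>i. (i, r) \<notin> G) \<and> (r, j) \<in> G\<^sup>*" using noparent mj by blast
  qed
  have fb: "\<forall>i\<in>N. finite {j. (i, j) \<in> G}"
  proof
    fix a assume "a \<in> N"
    define P where "P \<phi> b = (\<exists>n. enabled_dia \<psi> (S n) a \<phi> \<and> (a, \<phi>, b) \<notin> snd (S n) \<and>
         snd (S (Suc n)) = insert (a, \<phi>, b) (snd (S n)))" for \<phi> b
    have "{j. (a, j) \<in> G} \<subseteq> (\<Union>\<phi>\<in>Dia -` subf \<psi>. {b. P \<phi> b})"
    proof
      fix b assume "b \<in> {j. (a, j) \<in> G}"
      then obtain n \<phi> where "enabled_dia \<psi> (S n) a \<phi>" "(a, \<phi>, b) \<notin> snd (S n)" "Dia \<phi> \<in> subf \<psi>"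
        "snd (S (Suc n)) = insert (a, \<phi>, b) (snd (S n))"
        unfolding G_def using edge2[OF tb, of a b] by blast
      then show "b \<in> (\<Union>\<phi>\<in>Dia -` subf \<psi>. {b. P \<phi> b})" unfolding P_def by blast
    qed
    moreover have "finite (\<Union>\<phi>\<in>Dia -` subf \<psi>. {b. P \<phi> b})"
    proof (rule finite_UN_I)
      show "finite (Dia -` subf \<psi>)" by (rule finite_vimageI) (auto simp: finite_subf inj_def)
    next
      fix \<phi> show "finite {b. P \<phi> b}"
      proof (rule subsingleton_finite)
        fix b b' assume "P \<phi> b" "P \<phi> b'"
        then obtain n n' where n: "enabled_dia \<psi> (S n) a \<phi>" "(a, \<phi>, b) \<notin> snd (S n)"
           "snd (S (Suc n)) = insert (a, \<phi>, b) (snd (S n))"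
          and n': "enabled_dia \<psi> (S n') a \<phi>" "(a, \<phi>, b') \<notin> snd (S n')"
           "snd (S (Suc n')) = insert (a, \<phi>, b') (snd (S n'))"
          unfolding P_def by blast
        have "\<not> Suc n \<le> n'"
        proof
          assume "Suc n \<le> n'"
          then have "(a, \<phi>, b) \<in> snd (S n')" using snd_mono[OF tb] n(3) by blast
          then show False using n'(1) by (auto simp: enabled_dia_def)
        qed
        moreover have "\<not> Suc n' \<le> n"
        proof
          assume "Suc n' \<le> n"
          then have "(a, \<phi>, b') \<in> snd (S n)" using snd_mono[OF tb] n'(3) by blast
          then show False using n(1) by (auto simp: enabled_dia_def)
        qed
        ultimately have "n = n'" by simp
        then have "(a, \<phi>, b) \<in> insert (a, \<phi>, b') (snd (S n))" using n(3) n'(3) by auto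
        then show "b = b'" using n(2) by auto
      qed
    qed
    ultimately show "finite {j. (a, j) \<in> G}" by (rule finite_subset)
  qed
  have "finite {r \<in> N. \<forall>i. (i, r) \<notin> G}"
    using roots finite_nomsf finite_subset by blast
  then show ?thesis unfolding finite_wf_fb_forest_def N_def[symmetric] G_def[symmetric]
    using sub uniq reach wfG fb by blast
qed

end
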